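(* Let $p\in(0,1)$, $q=1-p$, $N\ge1$, and let $Z$ be the Markov chain on $\{0,1,\dots,N\}$ with transition probabilities: given $Z(t)=m$, $Z(t+1)$ has the binomial law $\mathcal B(N,1-q^m)$ if $m\ge1$, and $\mathcal B(N,1-q^N)$ if $m=0$. Let $P_N,E_N$ refer to the chain started at $Z(0)=N$, and $T_k=\inf\{t\ge1:Z(t)=k\}$. Then, as $N\to\infty$, $$P_N(T_0<T_N)\sim q^{N^2}2^N,\qquad \lim_{N\to\infty}E_N(T_0\mid T_0<T_N)=2,\qquad \lim_{N\to\infty}E_N(T_N\mid T_N<T_0)=1.$$
   Context: $a_N\sim b_N$ means $a_N/b_N\to1$. *)

theory Defs
  imports "HOL-Probability.Probability" "HOL-Library.Landau_Symbols"
begin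

definition trans_prob :: "real \<Rightarrow> nat \<Rightarrow> nat \<Rightarrow> nat \<Rightarrow> real" where
  "trans_prob p N m k =
     pmf (binomial_pmf N (1 - (1 - p) ^ (if m = 0 then N else m))) k"

text \<open>For t \<ge> 1: probability, for the chain started at Z(0) = N, that Z(t) = a and
  Z(s) \<notin> {a, b} for all 1 \<le> s < t, i.e. the event {T_a = t, T_b > t}.\<close>
definition first_hit_at :: "real \<Rightarrow> nat \<Rightarrow> nat \<Rightarrow> nat \<Rightarrow> nat \<Rightarrow> real" where
  "first_hit_at p N a b t =
     (\<Sum>zs \<in> {zs. set zs \<subseteq> {0..N} - {a, b} \<and> length zs = t - 1}.
        \<Prod>i<t. trans_prob p N ((N # zs @ [a]) ! i) ((N # zs @ [a]) ! Suc i))"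

text \<open>P_N(T_a < T_b), with T_k = inf {t \<ge> 1. Z(t) = k}.\<close>
definition hit_before :: "real \<Rightarrow> nat \<Rightarrow> nat \<Rightarrow> nat \<Rightarrow> real" where
  "hit_before p N a b = (\<Sum>t. first_hit_at p N a b (Suc t))"

definition hit_time_mass :: "real \<Rightarrow> nat \<Rightarrow> nat \<Rightarrow> nat \<Rightarrow> real" where
  "hit_time_mass p N a b = (\<Sum>t. real (Suc t) * first_hit_at p N a b (Suc t))"

definition cond_hit_time :: "real \<Rightarrow> nat \<Rightarrow> nat \<Rightarrow> nat \<Rightarrow> real" where
  "cond_hit_time p N a b = hit_time_mass p N a b / hit_before p N a b"

end

theory Submission
  imports Defs "HOL-Real_Asymp.Real_Asymp"
begin


fun Hs :: "(nat \<Rightarrow> nat \<Rightarrow> real) \<Rightarrow> nat set \<Rightarrow> nat \<Rightarrow> nat \<Rightarrow> nat \<Rightarrow> real" where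
  "Hs T S a 0 x = T x a"
| "Hs T S a (Suc n) x = (\<Sum>z\<in>S. T x z * Hs T S a n z)"

lemma path_sum:
  assumes "finite S"
  shows "(\<Sum>zs\<in>{zs. set zs \<subseteq> S \<and> length zs = n}.
            \<Prod>i<Suc n. T ((x # zs @ [a]) ! i) ((x # zs @ [a]) ! Suc i)) = Hs T S a n x"
proof (induction n arbitrary: x)
  case 0
  have "{zs. set zs \<subseteq> S \<and> length zs = 0} = {[]}" by auto
  then show ?case by simp
next
  case (Suc n)
  let ?L = "{zs. set zs \<subseteq> S \<and> length zs = n}"
  have fin: "finite ?L" using finite_lists_length_eq[OF assms] by simp
  have inj: "inj_on (\<lambda>(xs, z). z # xs) (?L \<times> S)" by (auto simp: inj_on_def)
  have "(\<Sum>zs\<in>{zs. set zs \<subseteq> S \<and> length zs = Suc n}.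
            \<Prod>i<Suc (Suc n). T ((x # zs @ [a]) ! i) ((x # zs @ [a]) ! Suc i))
      = (\<Sum>(xs,z)\<in>?L \<times> S. \<Prod>i<Suc (Suc n). T ((x # (z#xs) @ [a]) ! i) ((x # (z#xs) @ [a]) ! Suc i))"
    apply (subst lists_length_Suc_eq) apply (subst sum.reindex[OF inj]) apply (simp only: comp_def case_prod_unfold) done
  also have "\<dots> = (\<Sum>(xs,z)\<in>?L \<times> S. T x z * (\<Prod>i<Suc n. T ((z # xs @ [a]) ! i) ((z # xs @ [a]) ! Suc i)))"
    by (intro sum.cong refl) (simp only: prod.lessThan_Suc_shift nth_Cons_0 nth_Cons_Suc case_prod_unfold append_Cons)
  also have "\<dots> = (\<Sum>xs\<in>?L. \<Sum>z\<in>S. T x z * (\<Prod>i<Suc n. T ((z # xs @ [a]) ! i) ((z # xs @ [a]) ! Suc i)))"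
    by (simp add: sum.cartesian_product)
  also have "\<dots> = (\<Sum>z\<in>S. T x z * (\<Sum>xs\<in>?L. (\<Prod>i<Suc n. T ((z # xs @ [a]) ! i) ((z # xs @ [a]) ! Suc i))))"
    by (subst sum.swap) (simp add: sum_distrib_left)
  also have "\<dots> = Hs T S a (Suc n) x" using Suc by simp
  finally show ?case .
qed

lemma first_hit_Hs:
  "first_hit_at p N a b (Suc n) = Hs (trans_prob p N) ({0..N} - {a, b}) a n N"
  unfolding first_hit_at_def by (subst path_sum[symmetric]) auto

lemma super:
  assumes fin: "finite S" and T0: "\<And>x y. 0 \<le> T x y" and l: "0 \<le> l"
    and u0: "\<And>x. x \<in> S \<Longrightarrow> 0 \<le> u x"
    and sup: "\<And>x. x \<in> S \<Longrightarrow> l * (T x a + (\<Sum>k\<in>S. T x k * u k)) \<le> u x"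
  shows "x \<in> S \<Longrightarrow> (\<Sum>n<M. l ^ Suc n * Hs T S a n x) \<le> u x"
proof (induction M arbitrary: x)
  case 0 then show ?case using u0 by simp
next
  case (Suc M)
  have "(\<Sum>n<Suc M. l ^ Suc n * Hs T S a n x)
      = l * T x a + (\<Sum>n<M. l ^ Suc (Suc n) * Hs T S a (Suc n) x)"
    by (subst sum.lessThan_Suc_shift) simp
  also have "(\<Sum>n<M. l ^ Suc (Suc n) * Hs T S a (Suc n) x)
      = l * (\<Sum>z\<in>S. T x z * (\<Sum>n<M. l ^ Suc n * Hs T S a n z))"
    by (simp add: sum_distrib_left sum_distrib_right mult_ac sum.swap[of _ "{..<M}"])
  also have "\<dots> \<le> l * (\<Sum>z\<in>S. T x z * u z)"
    by (intro mult_left_mono sum_mono l mult_left_mono T0 Suc.IH) auto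
  finally show ?case using sup[OF Suc.prems] by (simp add: algebra_simps)
qed



lemma tail1:
  assumes fin: "finite S" and T0: "\<And>x y. 0 \<le> T x y" and l: "0 \<le> l"
    and u0: "\<And>x. x \<in> S \<Longrightarrow> 0 \<le> u x"
    and sup: "\<And>x. x \<in> S \<Longrightarrow> l * (T x a + (\<Sum>k\<in>S. T x k * u k)) \<le> u x"
  shows "(\<Sum>t<M. l ^ Suc t * Hs T S a (Suc t) c) \<le> (\<Sum>z\<in>S. T c z * u z)"
proof -
  have "(\<Sum>t<M. l ^ Suc t * Hs T S a (Suc t) c) = (\<Sum>z\<in>S. T c z * (\<Sum>t<M. l ^ Suc t * Hs T S a t z))"
    by (simp add: sum_distrib_left sum_distrib_right mult_ac sum.swap[of _ "{..<M}"])
  also have "\<dots> \<le> (\<Sum>z\<in>S. T c z * u z)"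
    by (intro sum_mono mult_left_mono T0 super[OF fin T0 l u0 sup]) auto
  finally show ?thesis .
qed

lemma tail2:
  assumes fin: "finite S" and T0: "\<And>x y. 0 \<le> T x y" and l: "0 \<le> l"
    and u0: "\<And>x. x \<in> S \<Longrightarrow> 0 \<le> u x"
    and sup: "\<And>x. x \<in> S \<Longrightarrow> l * (T x a + (\<Sum>k\<in>S. T x k * u k)) \<le> u x"
  shows "(\<Sum>t<M. l ^ Suc (Suc t) * Hs T S a (Suc (Suc t)) c) \<le> (\<Sum>z\<in>S. T c z * (u z - l * T z a))"
proof -
  have "(\<Sum>t<M. l ^ Suc (Suc t) * Hs T S a (Suc (Suc t)) c)
     = (\<Sum>z\<in>S. T c z * (l * (\<Sum>k\<in>S. T z k * (\<Sum>t<M. l ^ Suc t * Hs T S a t k))))"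
    by (simp add: sum_distrib_left sum_distrib_right mult_ac sum.swap[of _ "{..<M}"])
  also have "\<dots> \<le> (\<Sum>z\<in>S. T c z * (l * (\<Sum>k\<in>S. T z k * u k)))"
    by (intro sum_mono mult_left_mono T0 l super[OF fin T0 l u0 sup]) auto
  also have "\<dots> \<le> (\<Sum>z\<in>S. T c z * (u z - l * T z a))"
  proof (intro sum_mono mult_left_mono T0)
    fix z assume "z \<in> S" from sup[OF this] show "l * (\<Sum>k\<in>S. T z k * u k) \<le> u z - l * T z a"
      by (simp add: algebra_simps)
  qed
  finally show ?thesis .
qed

definition Kq :: "real \<Rightarrow> nat \<Rightarrow> nat \<Rightarrow> nat \<Rightarrow> real" where
  "Kq q N m k = real (N choose k) * (1 - q ^ (if m = 0 then N else m)) ^ k * (q ^ (if m = 0 then N else m)) ^ (N - k)"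

lemma trans_Kq: assumes "0 < p" "p < 1" shows "trans_prob p N = Kq (1 - p) N"
proof (intro ext)
  fix m k
  have "0 \<le> (1 - p) ^ (if m = 0 then N else m)" "(1 - p) ^ (if m = 0 then N else m) \<le> 1"
    using assms by (auto intro: power_le_one)
  then show "trans_prob p N m k = Kq (1 - p) N m k"
    unfolding trans_prob_def Kq_def by (subst pmf_binomial) auto
qed

lemma Kq_nonneg: "0 \<le> q \<Longrightarrow> q \<le> 1 \<Longrightarrow> 0 \<le> Kq q N m k"
  unfolding Kq_def by (intro mult_nonneg_nonneg zero_le_power) (auto intro: power_le_one)

lemma Kq_sum: assumes "0 \<le> q" "q \<le> 1" shows "(\<Sum>k\<le>N. Kq q N m k) = 1"
proof -
  have "(\<Sum>k\<le>N. Kq q N m k) = ((1 - q ^ (if m = 0 then N else m)) + q ^ (if m = 0 then N else m)) ^ N"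
    unfolding Kq_def binomial_ring by simp
  then show ?thesis by simp
qed



lemma binom_partial:
  assumes "0 \<le> (y::real)"
  shows "(\<Sum>k\<in>{1..<N}. real (N choose k) * y ^ k) \<le> (1 + y) ^ N - 1"
proof -
  have eq: "(1 + y) ^ N = (\<Sum>k\<le>N. real (N choose k) * y ^ k)"
    using binomial_ring[of y 1 N] by (simp add: add.commute)
  have "(\<Sum>k\<in>insert 0 {1..<N}. real (N choose k) * y ^ k) \<le> (\<Sum>k\<le>N. real (N choose k) * y ^ k)"
    by (intro sum_mono2) (auto simp: assms)
  moreover have "(\<Sum>k\<in>insert 0 {1..<N}. real (N choose k) * y ^ k) = 1 + (\<Sum>k\<in>{1..<N}. real (N choose k) * y ^ k)"
    by (subst sum.insert) auto
  ultimately show ?thesis using eq by simp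
qed

lemma pow_minus_one_ge:
  assumes "0 \<le> (X::real)" "1 \<le> N"
  shows "X * (1 + X) ^ (N - 1) \<le> (1 + X) ^ N - 1"
proof -
  have "(1 + X) ^ N = (1 + X) * (1 + X) ^ (N - 1)"
    using assms(2) by (metis Suc_diff_le diff_Suc_1 power_Suc)
  moreover have "1 \<le> (1 + X) ^ (N - 1)" using assms by (intro one_le_power) auto
  ultimately show ?thesis by (simp add: algebra_simps)
qed

lemma key_term:
  assumes "0 \<le> (X::real)" "X \<le> q" "1 \<le> k" "k \<le> N"
  shows "X ^ k * (1 + q) ^ N \<le> X * (1 + X) ^ (N - 1) * (q ^ (k - 1) * (1 + q) ^ (N - k + 1))"
proof -
  have q0: "0 \<le> q" using assms by simp
  have "X ^ k * (1 + q) ^ N = X * (X * (1 + q)) ^ (k - 1) * (1 + q) ^ (N - k + 1)"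
  proof -
    have "X ^ k = X * X ^ (k - 1)" using assms(3) by (metis Suc_diff_le diff_Suc_1 power_Suc)
    moreover have "(1 + q) ^ N = (1 + q) ^ (k - 1) * (1 + q) ^ (N - k + 1)"
    proof -
      have "N = (k - 1) + (N - k + 1)" using assms(3,4) by simp
      then show ?thesis by (metis power_add)
    qed
    ultimately show ?thesis by (simp add: power_mult_distrib mult_ac)
  qed
  also have "\<dots> \<le> X * (q ^ (k - 1) * (1 + X) ^ (N - 1)) * (1 + q) ^ (N - k + 1)"
  proof -
    have "(X * (1 + q)) ^ (k - 1) \<le> (q * (1 + X)) ^ (k - 1)"
      using assms by (intro power_mono) (auto simp: algebra_simps)
    also have "\<dots> = q ^ (k - 1) * (1 + X) ^ (k - 1)" by (simp add: power_mult_distrib)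
    also have "\<dots> \<le> q ^ (k - 1) * (1 + X) ^ (N - 1)"
      using assms by (intro mult_left_mono power_increasing) auto
    finally show ?thesis using assms q0 by (intro mult_right_mono mult_left_mono) auto
  qed
  finally show ?thesis by (simp add: mult_ac)
qed



definition epsK :: "real \<Rightarrow> nat \<Rightarrow> nat \<Rightarrow> real" where
  "epsK q N K = (1 + q ^ K) ^ N - 1"
definition etaK :: "real \<Rightarrow> nat \<Rightarrow> nat \<Rightarrow> real" where
  "etaK q N K = real K * real N ^ K * 2 ^ (K + 1) * q ^ (N - K - 1)"
definition u1 :: "real \<Rightarrow> nat \<Rightarrow> nat \<Rightarrow> real" where
  "u1 q N k = q ^ (k * N) * (2 + 8 * ((1 + q ^ (N - k)) ^ N - 1))"

lemma g_nonneg: "0 \<le> (q::real) \<Longrightarrow> 0 \<le> (1 + q ^ m) ^ N - 1"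
  by (simp add: one_le_power)

lemma g_le_eps: "0 \<le> (q::real) \<Longrightarrow> q \<le> 1 \<Longrightarrow> K \<le> m \<Longrightarrow> (1 + q ^ m) ^ N - 1 \<le> epsK q N K"
  unfolding epsK_def by (simp add: power_mono power_decreasing)

lemma exp_eq: assumes "x \<le> N" "k \<le> N"
  shows "((q::real) ^ x) ^ (N - k) * q ^ (k * N) = q ^ (x * N) * (q ^ (N - x)) ^ k"
proof -
  have "x * (N - k) + k * N = x * N + (N - x) * k"
    using assms by (simp add: diff_mult_distrib diff_mult_distrib2 algebra_simps)
  then have "q ^ (x * (N - k) + k * N) = q ^ (x * N + (N - x) * k)" by simp
  then show ?thesis by (simp only: power_mult[symmetric] power_add[symmetric])
qed

lemma term_bound:
  assumes q: "0 < q" "q < 1" and KN: "K < N" and x: "x \<in> {1..<N}" and k: "k \<in> {1..<N}" "N - K \<le> k"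
  shows "real (N choose k) * ((1 - q ^ x) * q ^ (N - x)) ^ k * ((1 + q ^ (N - k)) ^ N - 1)
     \<le> real N ^ K * 2 ^ (K + 1) * q ^ (N - K - 1) * ((1 + q ^ (N - x)) ^ N - 1)"
proof -
  define X where "X = q ^ (N - x)"
  define y where "y = (1 - q ^ x) * q ^ (N - x)"
  have X0: "0 \<le> X" using q unfolding X_def by simp
  have "X \<le> q ^ 1" unfolding X_def by (rule power_decreasing) (use q x in auto)
  then have Xq: "X \<le> q" by simp
  have qx: "0 \<le> 1 - q ^ x" "1 - q ^ x \<le> 1" using q by (auto simp: power_le_one)
  have y0: "0 \<le> y" unfolding y_def X_def using qx q by simp
  have yX: "y \<le> X" unfolding y_def X_def using mult_right_mono[OF qx(2), of "q ^ (N - x)"] q by simp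
  have c1: "real (N choose k) \<le> real N ^ K"
  proof -
    have "N choose k = N choose (N - k)" by (rule binomial_symmetric) (use k in simp)
    also have "\<dots> \<le> N ^ (N - k)" by (rule binomial_le_pow) simp
    also have "\<dots> \<le> N ^ K" using k x by (intro power_increasing) auto
    finally have "N choose k \<le> N ^ K" .
    then have "real (N choose k) \<le> real (N ^ K)" by (rule of_nat_mono)
    then show ?thesis by simp
  qed
  have c2: "(1 + q ^ (N - k)) ^ N - 1 \<le> (1 + q) ^ N"
  proof -
    have "q ^ (N - k) \<le> q" using q k by (intro power_decreasing[of 1 "N-k" q, simplified]) auto
    then have "(1 + q ^ (N - k)) ^ N \<le> (1 + q) ^ N" using q by (intro power_mono) auto
    then show ?thesis by simp
  qed
  have c3: "y ^ k \<le> X ^ k" using y0 yX by (intro power_mono) auto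
  have c4: "X ^ k * (1 + q) ^ N \<le> X * (1 + X) ^ (N - 1) * (q ^ (k - 1) * (1 + q) ^ (N - k + 1))"
    using key_term[OF X0 Xq, of k N] k by auto
  have c5: "X * (1 + X) ^ (N - 1) \<le> (1 + X) ^ N - 1" using pow_minus_one_ge[OF X0, of N] k by auto
  have c6: "q ^ (k - 1) * (1 + q) ^ (N - k + 1) \<le> q ^ (N - K - 1) * 2 ^ (K + 1)"
  proof (intro mult_mono)
    show "q ^ (k - 1) \<le> q ^ (N - K - 1)" using q k by (intro power_decreasing) auto
    have "(1 + q) ^ (N - k + 1) \<le> (1 + q) ^ (K + 1)" using q k by (intro power_increasing) auto
    also have "\<dots> \<le> 2 ^ (K + 1)" using q by (intro power_mono) auto
    finally show "(1 + q) ^ (N - k + 1) \<le> 2 ^ (K + 1)" .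
  qed (use q in auto)
  have g0: "0 \<le> (1 + q ^ (N - k)) ^ N - 1" using q by (simp add: one_le_power)
  have "real (N choose k) * y ^ k * ((1 + q ^ (N - k)) ^ N - 1) \<le> real N ^ K * (X ^ k * (1 + q) ^ N)"
  proof -
    have "real (N choose k) * y ^ k * ((1 + q ^ (N - k)) ^ N - 1) \<le> real N ^ K * X ^ k * (1 + q) ^ N"
      by (rule mult_mono[OF mult_mono[OF c1 c3]]) (use c2 g0 y0 X0 q in auto)
    then show ?thesis by (simp add: mult_ac)
  qed
  also have "\<dots> \<le> real N ^ K * (X * (1 + X) ^ (N - 1) * (q ^ (k - 1) * (1 + q) ^ (N - k + 1)))"
    using c4 by (intro mult_left_mono) auto
  also have "\<dots> \<le> real N ^ K * (((1 + X) ^ N - 1) * (q ^ (N - K - 1) * 2 ^ (K + 1)))"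
    by (rule mult_left_mono[OF mult_mono[OF c5 c6]]) (use X0 q in auto)
  finally show ?thesis by (simp only: X_def y_def mult_ac)
qed



lemma part1_super:
  assumes q: "0 < q" "q < 1" and KN: "K < N" and small: "epsK q N K + etaK q N K \<le> 1/4"
    and x: "x \<in> {1..<N}"
  shows "2 * (Kq q N x 0 + (\<Sum>k\<in>{1..<N}. Kq q N x k * u1 q N k)) \<le> u1 q N x"
proof -
  define y where "y = (1 - q ^ x) * q ^ (N - x)"
  define X where "X = q ^ (N - x)"
  define A where "A = (1 + X) ^ N - 1"
  define g where "g k = (1 + q ^ (N - k)) ^ N - 1" for k
  define c where "c = real N ^ K * 2 ^ (K + 1) * q ^ (N - K - 1)"
  have x0: "x \<noteq> 0" using x by auto
  have X0: "0 \<le> X" using q unfolding X_def by simp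
  have qx: "0 \<le> 1 - q ^ x" "1 - q ^ x \<le> 1" using q by (auto simp: power_le_one)
  have y0: "0 \<le> y" unfolding y_def using qx q by simp
  have yX: "y \<le> X" unfolding y_def X_def using mult_right_mono[OF qx(2), of "q ^ (N - x)"] q by simp
  have A0: "0 \<le> A" unfolding A_def using X0 by (simp add: one_le_power)
  have g0: "0 \<le> g k" for k unfolding g_def using q by (simp add: one_le_power)
  have c0: "0 \<le> c" unfolding c_def using q by simp
  have h1: "Kq q N x 0 = q ^ (x * N)"
    unfolding Kq_def using x0 by (simp add: power_mult)
  have h2: "Kq q N x k * u1 q N k = q ^ (x * N) * (real (N choose k) * y ^ k * (2 + 8 * g k))"
    if k: "k \<in> {1..<N}" for k
  proof -
    have "Kq q N x k * u1 q N k
        = real (N choose k) * (1 - q ^ x) ^ k * ((q ^ x) ^ (N - k) * q ^ (k * N)) * (2 + 8 * g k)"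
      unfolding Kq_def u1_def g_def using x0 by (simp add: mult_ac)
    also have "(q ^ x) ^ (N - k) * q ^ (k * N) = q ^ (x * N) * (q ^ (N - x)) ^ k"
      using x k by (intro exp_eq) auto
    finally show ?thesis unfolding y_def by (simp add: power_mult_distrib mult_ac)
  qed
  have h3: "(\<Sum>k\<in>{1..<N}. real (N choose k) * y ^ k) \<le> A"
  proof -
    have "(1 + y) ^ N \<le> (1 + X) ^ N" using y0 yX by (intro power_mono) auto
    then show ?thesis using binom_partial[OF y0, of N] unfolding A_def by linarith
  qed
  have h4: "(\<Sum>k\<in>{1..<N}. real (N choose k) * y ^ k * g k) \<le> (epsK q N K + etaK q N K) * A"
  proof -
    have "(\<Sum>k\<in>{1..<N}. real (N choose k) * y ^ k * g k)
        \<le> (\<Sum>k\<in>{1..<N}. epsK q N K * (real (N choose k) * y ^ k) + (if N - K \<le> k then c * A else 0))"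
    proof (intro sum_mono)
      fix k assume k: "k \<in> {1..<N}"
      show "real (N choose k) * y ^ k * g k \<le> epsK q N K * (real (N choose k) * y ^ k) + (if N - K \<le> k then c * A else 0)"
      proof (cases "N - K \<le> k")
        case True
        have "real (N choose k) * y ^ k * g k \<le> c * A"
          using term_bound[OF q KN x k True] unfolding y_def g_def c_def A_def X_def .
        moreover have "0 \<le> epsK q N K * (real (N choose k) * y ^ k)"
          unfolding epsK_def using q y0 by (simp add: one_le_power)
        ultimately show ?thesis using True by simp
      next
        case False
        have "g k \<le> epsK q N K" unfolding g_def using g_le_eps[of q K "N - k" N] q False by simp
        then have "real (N choose k) * y ^ k * g k \<le> real (N choose k) * y ^ k * epsK q N K"
          using y0 by (intro mult_left_mono) auto
        then show ?thesis using False by (simp add: mult_ac)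
      qed
    qed
    also have "\<dots> = epsK q N K * (\<Sum>k\<in>{1..<N}. real (N choose k) * y ^ k)
        + c * A * real (card {k \<in> {1..<N}. N - K \<le> k})"
      by (simp add: sum.distrib sum_distrib_left sum.inter_filter[symmetric])
    also have "\<dots> \<le> epsK q N K * A + c * A * real K"
    proof -
      have a: "epsK q N K * (\<Sum>k\<in>{1..<N}. real (N choose k) * y ^ k) \<le> epsK q N K * A"
        using h3 q by (intro mult_left_mono) (auto simp: epsK_def one_le_power)
      have "card {k \<in> {1..<N}. N - K \<le> k} \<le> card {N - K..<N}"
        by (intro card_mono) auto
      then have b: "real (card {k \<in> {1..<N}. N - K \<le> k}) \<le> real K" using KN by simp
      have "c * A * real (card {k \<in> {1..<N}. N - K \<le> k}) \<le> c * A * real K"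
        using b c0 A0 by (intro mult_left_mono) auto
      then show ?thesis using a by linarith
    qed
    also have "\<dots> = (epsK q N K + etaK q N K) * A"
      unfolding etaK_def c_def by (simp add: algebra_simps)
    finally show ?thesis .
  qed
  have gx: "g x = A" unfolding g_def A_def X_def ..
  have "(\<Sum>k\<in>{1..<N}. Kq q N x k * u1 q N k)
      = q ^ (x * N) * (2 * (\<Sum>k\<in>{1..<N}. real (N choose k) * y ^ k) + 8 * (\<Sum>k\<in>{1..<N}. real (N choose k) * y ^ k * g k))"
  proof -
    have "(\<Sum>k\<in>{1..<N}. Kq q N x k * u1 q N k) = (\<Sum>k\<in>{1..<N}. q ^ (x * N) * (real (N choose k) * y ^ k * (2 + 8 * g k)))"
      by (rule sum.cong[OF refl h2])
    also have "\<dots> = q ^ (x * N) * (\<Sum>k\<in>{1..<N}. 2 * (real (N choose k) * y ^ k) + 8 * (real (N choose k) * y ^ k * g k))"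
      by (simp add: sum_distrib_left distrib_left mult_ac)
    also have "\<dots> = q ^ (x * N) * (2 * (\<Sum>k\<in>{1..<N}. real (N choose k) * y ^ k) + 8 * (\<Sum>k\<in>{1..<N}. real (N choose k) * y ^ k * g k))"
      by (simp add: sum.distrib sum_distrib_left)
    finally show ?thesis .
  qed
  also have "\<dots> \<le> q ^ (x * N) * (2 * A + 8 * ((epsK q N K + etaK q N K) * A))"
    using h3 h4 q by (intro mult_left_mono add_mono) auto
  also have "\<dots> \<le> q ^ (x * N) * (4 * A)"
  proof -
    have "8 * ((epsK q N K + etaK q N K) * A) \<le> 8 * (1/4 * A)"
      using small A0 by (intro mult_left_mono mult_right_mono) auto
    then show ?thesis using q by (intro mult_left_mono) auto
  qed
  finally have "2 * (Kq q N x 0 + (\<Sum>k\<in>{1..<N}. Kq q N x k * u1 q N k)) \<le> 2 * (q ^ (x * N) + q ^ (x * N) * (4 * A))"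
    unfolding h1 by (simp only: mult_le_cancel_left_pos add_le_cancel_left)
  also have "\<dots> = u1 q N x"
    unfolding u1_def using gx unfolding g_def by (simp add: algebra_simps)
  finally show ?thesis .
qed



lemma choose_le_K:
  assumes "z < N" "N - z \<le> K"
  shows "real (N choose z) \<le> real N ^ K"
proof -
  have N0: "1 \<le> N" using assms(1) by linarith
  have "N choose z = N choose (N - z)" using binomial_symmetric[of z N] assms(1) by linarith
  also have "\<dots> \<le> N ^ (N - z)" by (rule binomial_le_pow) simp
  also have "\<dots> \<le> N ^ K" by (rule power_increasing[OF assms(2) N0])
  finally have "N choose z \<le> N ^ K" .
  then have "real (N choose z) \<le> real (N ^ K)" by (rule of_nat_mono)
  then show ?thesis by simp
qed

lemma g_le_1q:
  assumes "0 < (q::real)" "q < 1" "z < N"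
  shows "(1 + q ^ (N - z)) ^ N - 1 \<le> (1 + q) ^ N"
proof -
  have "q ^ (N - z) \<le> q ^ 1" using assms by (intro power_decreasing) auto
  then have "(1 + q ^ (N - z)) ^ N \<le> (1 + q) ^ N" using assms by (intro power_mono) auto
  then show ?thesis by simp
qed

lemma choose_sum_le: "(\<Sum>z\<in>{1..<N}. real (N choose z)) \<le> 2 ^ N"
proof -
  have "(\<Sum>z\<in>{1..<N}. real (N choose z)) \<le> (\<Sum>z\<le>N. real (N choose z))"
    by (intro sum_mono2) auto
  also have "\<dots> = real (\<Sum>z\<le>N. N choose z)" by simp
  also have "\<dots> = 2 ^ N" by (simp add: choose_row_sum)
  finally show ?thesis .
qed

lemma card_top: "K < N \<Longrightarrow> real (card {k \<in> {1..<N}. N - K \<le> k}) \<le> real K"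
proof -
  assume KN: "K < N"
  have "card {k \<in> {1..<N}. N - K \<le> k} \<le> card {N - K..<N}"
    by (intro card_mono) auto
  then show ?thesis using KN by simp
qed

lemma part1_R2:
  assumes q: "0 < q" "q < 1" and KN: "K < N"
  shows "(\<Sum>z\<in>{1..<N}. Kq q N N z * (u1 q N z - 2 * Kq q N z 0))
     \<le> 8 * q ^ (N * N) * (epsK q N K * 2 ^ N + real K * real N ^ K * (1 + q) ^ N)"
proof -
  define g where "g k = (1 + q ^ (N - k)) ^ N - 1" for k
  have g0: "0 \<le> g k" for k unfolding g_def using q by (simp add: one_le_power)
  have t: "Kq q N N z * (u1 q N z - 2 * Kq q N z 0) \<le> 8 * q ^ (N * N) * (real (N choose z) * g z)"
    if z: "z \<in> {1..<N}" for z
  proof -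
    have z0: "z \<noteq> 0" using z by auto
    have E1: "u1 q N z - 2 * Kq q N z 0 = q ^ (z * N) * (8 * g z)"
    proof -
      have "Kq q N z 0 = q ^ (z * N)" unfolding Kq_def using z0 by (simp add: power_mult)
      then show ?thesis unfolding u1_def g_def by (simp add: algebra_simps)
    qed
    have E2: "Kq q N N z * q ^ (z * N) = real (N choose z) * (1 - q ^ N) ^ z * q ^ (N * N)"
    proof -
      have "(q ^ N) ^ (N - z) * q ^ (z * N) = q ^ (N * N)"
      proof -
        have "N * (N - z) + z * N = N * N" using z by (simp add: diff_mult_distrib2 algebra_simps)
        then show ?thesis by (metis power_add power_mult)
      qed
      moreover have "N \<noteq> 0" using z by auto
      ultimately show ?thesis unfolding Kq_def by (simp add: mult.assoc)
    qed
    have E3: "real (N choose z) * (1 - q ^ N) ^ z * q ^ (N * N) \<le> real (N choose z) * q ^ (N * N)"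
    proof -
      have "(1 - q ^ N) ^ z \<le> 1" using q by (intro power_le_one) (auto simp: power_le_one)
      then show ?thesis using q by (intro mult_right_mono) (auto intro: mult_left_le)
    qed
    have "Kq q N N z * (u1 q N z - 2 * Kq q N z 0) = (Kq q N N z * q ^ (z * N)) * (8 * g z)"
      unfolding E1 by (simp only: mult.assoc)
    also have "\<dots> = (real (N choose z) * (1 - q ^ N) ^ z * q ^ (N * N)) * (8 * g z)"
      unfolding E2 ..
    also have "\<dots> \<le> (real (N choose z) * q ^ (N * N)) * (8 * g z)"
      by (rule mult_right_mono[OF E3]) (use g0[of z] in simp)
    finally have "Kq q N N z * (u1 q N z - 2 * Kq q N z 0) \<le> (real (N choose z) * q ^ (N * N)) * (8 * g z)" .
    then show ?thesis by (simp add: mult_ac)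
  qed
  have s: "(\<Sum>z\<in>{1..<N}. real (N choose z) * g z) \<le> epsK q N K * 2 ^ N + real K * real N ^ K * (1 + q) ^ N"
  proof -
    have "(\<Sum>z\<in>{1..<N}. real (N choose z) * g z)
       \<le> (\<Sum>z\<in>{1..<N}. epsK q N K * real (N choose z) + (if N - K \<le> z then real N ^ K * (1 + q) ^ N else 0))"
    proof (intro sum_mono)
      fix z assume z: "z \<in> {1..<N}"
      have e0: "0 \<le> epsK q N K * real (N choose z)" using q by (simp add: epsK_def one_le_power)
      show "real (N choose z) * g z \<le> epsK q N K * real (N choose z) + (if N - K \<le> z then real N ^ K * (1 + q) ^ N else 0)"
      proof (cases "N - K \<le> z")
        case True
        have "real (N choose z) * g z \<le> real N ^ K * (1 + q) ^ N"
          using choose_le_K[of z N K] g_le_1q[OF q, of z N] True z g0[of z] unfolding g_def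
          by (intro mult_mono) auto
        then show ?thesis using True e0 by simp
      next
        case False
        have "g z \<le> epsK q N K" unfolding g_def using g_le_eps[of q K "N - z" N] q False by simp
        then have "real (N choose z) * g z \<le> real (N choose z) * epsK q N K" by (intro mult_left_mono) auto
        then show ?thesis using False by (simp add: mult_ac)
      qed
    qed
    also have "\<dots> = epsK q N K * (\<Sum>z\<in>{1..<N}. real (N choose z)) + real N ^ K * (1 + q) ^ N * real (card {k \<in> {1..<N}. N - K \<le> k})"
      by (simp add: sum.distrib sum_distrib_left sum.inter_filter[symmetric])
    also have "\<dots> \<le> epsK q N K * 2 ^ N + real N ^ K * (1 + q) ^ N * real K"
    proof -
      have a: "epsK q N K * (\<Sum>z\<in>{1..<N}. real (N choose z)) \<le> epsK q N K * 2 ^ N"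
        using choose_sum_le q by (intro mult_left_mono) (auto simp: epsK_def one_le_power)
      have "real N ^ K * (1 + q) ^ N * real (card {k \<in> {1..<N}. N - K \<le> k}) \<le> real N ^ K * (1 + q) ^ N * real K"
        using card_top[OF KN] q by (intro mult_left_mono) auto
      then show ?thesis using a by linarith
    qed
    finally show ?thesis by (simp add: mult_ac)
  qed
  have "(\<Sum>z\<in>{1..<N}. Kq q N N z * (u1 q N z - 2 * Kq q N z 0)) \<le> (\<Sum>z\<in>{1..<N}. 8 * q ^ (N * N) * (real (N choose z) * g z))"
    using t by (intro sum_mono) auto
  also have "\<dots> = 8 * q ^ (N * N) * (\<Sum>z\<in>{1..<N}. real (N choose z) * g z)" by (simp add: sum_distrib_left)
  also have "\<dots> \<le> 8 * q ^ (N * N) * (epsK q N K * 2 ^ N + real K * real N ^ K * (1 + q) ^ N)"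
    using s q by (intro mult_left_mono) auto
  finally show ?thesis .
qed



definition u3 :: "nat \<Rightarrow> nat \<Rightarrow> real" where
  "u3 K k = (if K \<le> k then 4 else 12)"

lemma Kq_S_sum:
  assumes "0 < q" "q < 1"
  shows "(\<Sum>k\<in>{1..<N}. Kq q N x k) \<le> 1 - Kq q N x N"
proof -
  have "(\<Sum>k\<in>insert N {1..<N}. Kq q N x k) \<le> (\<Sum>k\<le>N. Kq q N x k)"
    using assms by (intro sum_mono2) (auto intro: Kq_nonneg)
  also have "\<dots> = 1" using assms by (intro Kq_sum) auto
  finally show ?thesis by (subst (asm) sum.insert) auto
qed

lemma Kq_xN: "x \<noteq> 0 \<Longrightarrow> Kq q N x N = (1 - q ^ x) ^ N"
  unfolding Kq_def by simp

lemma one_minus_pow: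
  assumes "0 \<le> (v::real)" "v \<le> 1"
  shows "1 - (1 - v) ^ N \<le> (1 + v) ^ N - 1"
proof -
  have "1 + real N * (- v) \<le> (1 + (- v)) ^ N" using assms by (intro Bernoulli_inequality) auto
  moreover have "1 + real N * v \<le> (1 + v) ^ N" using assms by (intro Bernoulli_inequality) auto
  ultimately show ?thesis by simp
qed

lemma part3_super:
  assumes q: "0 < q" "q < 1" and KN: "K < N" and se: "epsK q N K \<le> 1/12" and sn: "etaK q N K \<le> 1/12"
    and x: "x \<in> {1..<N}"
  shows "2 * (Kq q N x N + (\<Sum>k\<in>{1..<N}. Kq q N x k * u3 K k)) \<le> u3 K x"
proof -
  have x0: "x \<noteq> 0" using x by auto
  have Kn: "0 \<le> Kq q N x k" for k using q by (intro Kq_nonneg) auto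
  have KxN: "Kq q N x N \<le> 1" unfolding Kq_xN[OF x0] using q by (intro power_le_one) (auto simp: power_le_one)
  have SS: "(\<Sum>k\<in>{1..<N}. Kq q N x k) \<le> 1 - Kq q N x N" by (rule Kq_S_sum[OF q])
  show ?thesis
  proof (cases "K \<le> x")
    case True
    have "(\<Sum>k\<in>{1..<N}. Kq q N x k * u3 K k) \<le> (\<Sum>k\<in>{1..<N}. Kq q N x k * 12)"
      using Kn by (intro sum_mono mult_left_mono) (auto simp: u3_def)
    also have "\<dots> = 12 * (\<Sum>k\<in>{1..<N}. Kq q N x k)" by (metis mult.commute sum_distrib_right)
    also have "\<dots> \<le> 12 * epsK q N K"
    proof -
      have v: "0 \<le> q ^ x" "q ^ x \<le> 1" using q by (auto simp: power_le_one)
      have "1 - Kq q N x N \<le> (1 + q ^ x) ^ N - 1"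
        unfolding Kq_xN[OF x0] by (rule one_minus_pow[OF v])
      also have "\<dots> \<le> epsK q N K" using g_le_eps[of q K x N] q True by simp
      finally show ?thesis using SS by simp
    qed
    finally show ?thesis using se KxN True by (simp add: u3_def)
  next
    case False
    have b: "Kq q N x k \<le> real N ^ K * q ^ (N - K)" if k: "k \<in> {1..<N}" "k < K" for k
    proof -
      have c: "real (N choose k) \<le> real N ^ K"
      proof -
        have "N choose k \<le> N ^ k" by (rule binomial_le_pow) (use k in simp)
        also have "\<dots> \<le> N ^ K" using k by (intro power_increasing) auto
        finally have "N choose k \<le> N ^ K" .
        then have "real (N choose k) \<le> real (N ^ K)" by (rule of_nat_mono)
        then show ?thesis by simp
      qed
      have d: "(1 - q ^ x) ^ k \<le> 1" using q by (intro power_le_one) (auto simp: power_le_one)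
      have e: "(q ^ x) ^ (N - k) \<le> q ^ (N - K)"
      proof -
        have "q ^ x \<le> q ^ 1" using q x by (intro power_decreasing) auto
        then have "(q ^ x) ^ (N - k) \<le> q ^ (N - k)" using q by (intro power_mono) auto
        also have "\<dots> \<le> q ^ (N - K)" using q k by (intro power_decreasing) auto
        finally show ?thesis .
      qed
      have "Kq q N x k = real (N choose k) * (1 - q ^ x) ^ k * (q ^ x) ^ (N - k)"
        unfolding Kq_def using x0 by simp
      also have "\<dots> \<le> real N ^ K * 1 * q ^ (N - K)"
        using c d e q by (intro mult_mono) (auto simp: power_le_one)
      finally show ?thesis by simp
    qed
    have "(\<Sum>k\<in>{1..<N}. Kq q N x k * u3 K k)
        \<le> (\<Sum>k\<in>{1..<N}. 4 * Kq q N x k + (if k < K then 8 * (real N ^ K * q ^ (N - K)) else 0))"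
    proof (intro sum_mono)
      fix k assume k: "k \<in> {1..<N}"
      show "Kq q N x k * u3 K k \<le> 4 * Kq q N x k + (if k < K then 8 * (real N ^ K * q ^ (N - K)) else 0)"
        using b[OF k] Kn[of k] by (auto simp: u3_def)
    qed
    also have "\<dots> = 4 * (\<Sum>k\<in>{1..<N}. Kq q N x k) + 8 * (real N ^ K * q ^ (N - K)) * real (card {k \<in> {1..<N}. k < K})"
      by (simp add: sum.distrib sum_distrib_left sum.inter_filter[symmetric])
    also have "\<dots> \<le> 4 * 1 + 8 * (1/12)"
    proof -
      have "card {k \<in> {1..<N}. k < K} \<le> card {..<K}" by (intro card_mono) auto
      then have cK: "real (card {k \<in> {1..<N}. k < K}) \<le> real K" by simp
      have "real N ^ K * q ^ (N - K) * real (card {k \<in> {1..<N}. k < K}) \<le> real N ^ K * q ^ (N - K) * real K"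
        using cK q by (intro mult_left_mono) auto
      also have "\<dots> \<le> etaK q N K"
      proof -
        have "q ^ (N - K) \<le> q ^ (N - K - 1)" using q by (intro power_decreasing) auto
        also have "\<dots> \<le> 2 ^ (K + 1) * q ^ (N - K - 1)"
        proof -
          have "(1::real) \<le> 2 ^ (K + 1)" by (rule one_le_power) simp
          then show ?thesis using mult_right_mono[of 1 "2 ^ (K + 1)" "q ^ (N - K - 1)"] q by simp
        qed
        finally have "q ^ (N - K) \<le> 2 ^ (K + 1) * q ^ (N - K - 1)" .
        then have "real N ^ K * real K * q ^ (N - K) \<le> real N ^ K * real K * (2 ^ (K + 1) * q ^ (N - K - 1))"
          by (intro mult_left_mono) auto
        then show ?thesis unfolding etaK_def by (simp add: mult_ac)
      qed
      finally have "real N ^ K * q ^ (N - K) * real (card {k \<in> {1..<N}. k < K}) \<le> 1/12" using sn by simp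
      moreover have "(\<Sum>k\<in>{1..<N}. Kq q N x k) \<le> 1" using SS Kn[of N] by simp
      ultimately show ?thesis by simp
    qed
    finally show ?thesis using KxN False by (simp add: u3_def)
  qed
qed

lemma part3_final:
  assumes q: "0 < q" "q < 1"
  shows "(\<Sum>z\<in>{1..<N}. Kq q N N z * u3 K z) \<le> 12 * (1 - (1 - q ^ N) ^ N)"
proof (cases "N = 0")
  case True then show ?thesis by simp
next
  case False
  have "(\<Sum>z\<in>{1..<N}. Kq q N N z * u3 K z) \<le> (\<Sum>z\<in>{1..<N}. Kq q N N z * 12)"
    using q by (intro sum_mono mult_left_mono) (auto simp: u3_def intro: Kq_nonneg)
  also have "\<dots> = 12 * (\<Sum>z\<in>{1..<N}. Kq q N N z)" by (metis mult.commute sum_distrib_right)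
  also have "\<dots> \<le> 12 * (1 - Kq q N N N)" using Kq_S_sum[OF q, of N N] by simp
  finally show ?thesis using Kq_xN[OF False] by simp
qed



definition Kf :: "nat \<Rightarrow> nat" where "Kf N = nat \<lfloor>sqrt (real N)\<rfloor>"

lemma Kf_le: "real (Kf N) \<le> sqrt (real N)"
  unfolding Kf_def by simp

lemma Kf_ge: "sqrt (real N) - 1 \<le> real (Kf N)"
  unfolding Kf_def by linarith

lemma pow_exp: "0 < (b::real) \<Longrightarrow> b ^ n = exp (real n * ln b)"
  by (simp add: exp_of_nat_mult)

lemma pow_le_exp_sqrt:
  assumes "1 \<le> (a::real)" "real k \<le> s"
  shows "a ^ k \<le> exp (s * ln a)"
proof -
  have "a ^ k = exp (real k * ln a)" using assms by (intro pow_exp) auto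
  also have "\<dots> \<le> exp (s * ln a)" using assms by (intro exp_mono mult_right_mono) auto
  finally show ?thesis .
qed

lemma pow_le_exp_small:
  assumes "0 < (b::real)" "b < 1" "s \<le> real k"
  shows "b ^ k \<le> exp (- (- ln b) * s)"
proof -
  have "b ^ k = exp (real k * ln b)" using assms by (intro pow_exp) auto
  also have "\<dots> \<le> exp (- (- ln b) * s)"
  proof (intro exp_mono)
    have "ln b < 0" using assms by simp
    then show "real k * ln b \<le> - (- ln b) * s" using assms by (simp add: mult_right_mono_neg)
  qed
  finally show ?thesis .
qed

lemma lim_eps:
  assumes q: "0 < q" "q < 1"
  shows "(\<lambda>N. epsK q N (Kf N)) \<longlonglongrightarrow> 0"
proof -
  define c where "c = - ln q"
  have c: "c > 0" using q unfolding c_def by simp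
  have l: "(\<lambda>N::nat. real N * exp (-c * (sqrt (real N) - 1))) \<longlonglongrightarrow> 0"
    using c by real_asymp
  have l2: "(\<lambda>N::nat. exp (real N * exp (-c * (sqrt (real N) - 1))) - 1) \<longlonglongrightarrow> 0"
  proof -
    have "(\<lambda>N::nat. exp (real N * exp (-c * (sqrt (real N) - 1))) - 1) \<longlonglongrightarrow> exp 0 - 1"
      by (intro tendsto_intros l)
    then show ?thesis by simp
  qed
  have bnd: "epsK q N (Kf N) \<le> exp (real N * exp (-c * (sqrt (real N) - 1))) - 1" for N
  proof -
    have "(1 + q ^ Kf N) ^ N \<le> exp (q ^ Kf N) ^ N"
      using q by (intro power_mono) (auto simp: exp_ge_add_one_self add.commute)
    also have "\<dots> = exp (real N * q ^ Kf N)" by (simp add: exp_of_nat_mult)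
    also have "\<dots> \<le> exp (real N * exp (-c * (sqrt (real N) - 1)))"
      using pow_le_exp_small[OF q Kf_ge[of N]] unfolding c_def
      by (intro exp_mono mult_left_mono) auto
    finally show ?thesis unfolding epsK_def by simp
  qed
  have pos: "0 \<le> epsK q N (Kf N)" for N using q by (auto simp: epsK_def one_le_power)
  show ?thesis
    apply (rule real_tendsto_sandwich[OF _ _ tendsto_const l2])
     apply (rule always_eventually, rule allI, rule pos)
    apply (rule always_eventually, rule allI, rule bnd)
    done
qed

lemma sandwich_lemma:
  assumes "\<And>N. N \<ge> N0 \<Longrightarrow> (0::real) \<le> f N" "\<And>N. N \<ge> N0 \<Longrightarrow> f N \<le> g N" "g \<longlonglongrightarrow> 0"
  shows "f \<longlonglongrightarrow> 0"
  by (rule real_tendsto_sandwich[OF _ _ tendsto_const assms(3)])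
     (auto simp: eventually_sequentially intro!: exI[of _ N0] assms(1,2))

lemma lim_eta:
  assumes q: "0 < q" "q < 1"
  shows "(\<lambda>N. etaK q N (Kf N)) \<longlonglongrightarrow> 0"
proof (rule sandwich_lemma[of 1])
  define c where "c = - ln q"
  have c: "c > 0" using q unfolding c_def by simp
  show "(\<lambda>N::nat. sqrt N * exp (sqrt N * ln N) * (2 * exp (sqrt N * ln 2)) * exp (-c * (N - sqrt N - 1))) \<longlonglongrightarrow> 0"
    using c by real_asymp
  fix N :: nat assume N: "N \<ge> 1"
  show "0 \<le> etaK q N (Kf N)" unfolding etaK_def using q by simp
  have a1: "real (Kf N) \<le> sqrt N" by (rule Kf_le)
  have a2: "real N ^ Kf N \<le> exp (sqrt N * ln N)" using N by (intro pow_le_exp_sqrt Kf_le) auto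
  have a3: "(2::real) ^ (Kf N + 1) \<le> 2 * exp (sqrt N * ln 2)"
  proof -
    have "(2::real) ^ Kf N \<le> exp (sqrt N * ln 2)" by (intro pow_le_exp_sqrt Kf_le) auto
    then show ?thesis by simp
  qed
  have a4: "q ^ (N - Kf N - 1) \<le> exp (-c * (N - sqrt N - 1))"
  proof -
    have "real N - sqrt N - 1 \<le> real (N - Kf N - 1)"
    proof (cases "Kf N + 1 \<le> N")
      case True then show ?thesis using Kf_le[of N] by (simp add: of_nat_diff)
    next
      case False then show ?thesis using Kf_le[of N] by simp
    qed
    from pow_le_exp_small[OF q this] show ?thesis unfolding c_def by simp
  qed
  have "etaK q N (Kf N) = real (Kf N) * real N ^ Kf N * 2 ^ (Kf N + 1) * q ^ (N - Kf N - 1)"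
    unfolding etaK_def ..
  also have "\<dots> \<le> sqrt N * exp (sqrt N * ln N) * (2 * exp (sqrt N * ln 2)) * exp (-c * (N - sqrt N - 1))"
    using a1 a2 a3 a4 q by (intro mult_mono) auto
  finally show "etaK q N (Kf N) \<le> sqrt N * exp (sqrt N * ln N) * (2 * exp (sqrt N * ln 2)) * exp (-c * (N - sqrt N - 1))" .
qed

lemma lim_D:
  assumes q: "0 < q" "q < 1"
  shows "(\<lambda>N. real (Kf N) * real N ^ Kf N * ((1 + q) / 2) ^ N) \<longlonglongrightarrow> 0"
proof (rule sandwich_lemma[of 1])
  define r where "r = - ln ((1 + q) / 2)"
  have r: "r > 0" using q unfolding r_def by simp
  show "(\<lambda>N::nat. sqrt N * exp (sqrt N * ln N) * exp (-r * N)) \<longlonglongrightarrow> 0"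
    using r by real_asymp
  fix N :: nat assume N: "N \<ge> 1"
  show "0 \<le> real (Kf N) * real N ^ Kf N * ((1 + q) / 2) ^ N" using q by simp
  have a1: "real (Kf N) \<le> sqrt N" by (rule Kf_le)
  have a2: "real N ^ Kf N \<le> exp (sqrt N * ln N)" using N by (intro pow_le_exp_sqrt Kf_le) auto
  have a3: "((1 + q) / 2) ^ N = exp (-r * N)" unfolding r_def using q by (subst pow_exp) (auto simp: mult.commute)
  show "real (Kf N) * real N ^ Kf N * ((1 + q) / 2) ^ N \<le> sqrt N * exp (sqrt N * ln N) * exp (-r * N)"
    unfolding a3 using a1 a2 by (intro mult_mono) auto
qed

lemma lim_Nq:
  assumes q: "0 < q" "q < 1"
  shows "(\<lambda>N. real N * q ^ N) \<longlonglongrightarrow> 0"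
proof -
  define c where "c = - ln q"
  have c: "c > 0" using q unfolding c_def by simp
  have l: "(\<lambda>N::nat. real N * exp (-c * real N)) \<longlonglongrightarrow> 0" using c by real_asymp
  have e: "q ^ N = exp (-c * real N)" for N
    using pow_exp[OF q(1), of N] unfolding c_def by (simp add: mult.commute)
  have "(\<lambda>N. real N * q ^ N) = (\<lambda>N::nat. real N * exp (-c * real N))"
    by (rule ext) (simp only: e)
  with l show ?thesis by simp
qed

lemma lim_pow_one:
  assumes q: "0 < (q::real)" "q < 1" and a: "0 < a" "a \<le> 1"
  shows "(\<lambda>N. (1 - a * q ^ N) ^ N) \<longlonglongrightarrow> 1"
proof -
  have l: "(\<lambda>N. 1 - a * (real N * q ^ N)) \<longlonglongrightarrow> 1"
  proof -
    have "(\<lambda>N. 1 - a * (real N * q ^ N)) \<longlonglongrightarrow> 1 - a * 0"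
      by (intro tendsto_intros lim_Nq q)
    then show ?thesis by simp
  qed
  have v: "0 \<le> a * q ^ N" "a * q ^ N \<le> 1" for N
  proof -
    have "q ^ N \<le> 1" using q by (intro power_le_one) auto
    then show "0 \<le> a * q ^ N" "a * q ^ N \<le> 1" using q a mult_le_one[of a "q ^ N"] by auto
  qed
  have lo: "1 - a * (real N * q ^ N) \<le> (1 - a * q ^ N) ^ N" for N
  proof -
    have "1 + real N * (- (a * q ^ N)) \<le> (1 + (- (a * q ^ N))) ^ N"
      using v[of N] by (intro Bernoulli_inequality) auto
    then show "1 - a * (real N * q ^ N) \<le> (1 - a * q ^ N) ^ N" by (simp add: algebra_simps)
  qed
  have hi: "(1 - a * q ^ N) ^ N \<le> 1" for N
    using v[of N] by (intro power_le_one) auto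
  show ?thesis
    apply (rule real_tendsto_sandwich[OF _ _ l tendsto_const])
     apply (rule always_eventually, rule allI, rule lo)
    apply (rule always_eventually, rule allI, rule hi)
    done
qed



lemma Hs_nonneg: "(\<And>x y. 0 \<le> T x y) \<Longrightarrow> 0 \<le> Hs T S a n x"
  by (induction n arbitrary: x) (auto intro!: sum_nonneg mult_nonneg_nonneg)

lemma pow2_ge: "real t + 1 \<le> 2 ^ t"
proof (induction t)
  case 0 then show ?case by simp
next
  case (Suc t)
  have "(1::real) \<le> 2 ^ t" by (rule one_le_power) simp
  with Suc show ?case by simp
qed

lemma series2:
  fixes h :: "nat \<Rightarrow> real"
  assumes h0: "\<And>t. 0 \<le> h t" and R: "\<And>M. (\<Sum>t<M. 2 ^ Suc (Suc t) * h (Suc (Suc t))) \<le> R"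
  shows "\<exists>T1 T2. (\<Sum>t. h t) = h 0 + h 1 + T1 \<and> (\<Sum>t. real (Suc t) * h t) = h 0 + 2 * h 1 + T2
     \<and> 0 \<le> T1 \<and> T1 \<le> T2 \<and> T2 \<le> R"
proof -
  have s2: "summable (\<lambda>t. 2 ^ Suc (Suc t) * h (Suc (Suc t)))"
    by (rule summableI_nonneg_bounded[OF _ R]) (simp add: h0)
  have le: "real t + 3 \<le> 2 ^ Suc (Suc t)" for t using pow2_ge[of "Suc (Suc t)"] by simp
  have b2: "real (Suc (t + 2)) * h (t + 2) \<le> 2 ^ Suc (Suc t) * h (Suc (Suc t))" for t
  proof -
    have "real (Suc (t + 2)) * h (t + 2) \<le> 2 ^ Suc (Suc t) * h (t + 2)"
      using mult_right_mono[OF le[of t] h0[of "t+2"]] by (simp add: add.commute)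
    then show ?thesis by (simp add: numeral_2_eq_2)
  qed
  have b1: "h (t + 2) \<le> real (Suc (t + 2)) * h (t + 2)" for t
    using mult_right_mono[of 1 "real (Suc (t+2))" "h (t+2)"] h0[of "t+2"] by simp
  have sT2: "summable (\<lambda>t. real (Suc (t + 2)) * h (t + 2))"
    by (rule summable_comparison_test'[OF s2, of 0]) (use b2 h0 in auto)
  have sT1: "summable (\<lambda>t. h (t + 2))"
    by (rule summable_comparison_test'[OF sT2, of 0]) (use b1 h0 in auto)
  have sh: "summable h" using sT1 by (subst summable_iff_shift[symmetric, of _ 2])
  have sm: "summable (\<lambda>t. real (Suc t) * h t)" using sT2 by (subst summable_iff_shift[symmetric, of _ 2])
  define T1 where "T1 = (\<Sum>t. h (t + 2))"
  define T2 where "T2 = (\<Sum>t. real (Suc (t + 2)) * h (t + 2))"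
  have e1: "(\<Sum>t. h t) = h 0 + h 1 + T1"
    unfolding T1_def using suminf_split_initial_segment[OF sh, of 2] by (simp add: numeral_2_eq_2)
  have e2: "(\<Sum>t. real (Suc t) * h t) = h 0 + 2 * h 1 + T2"
    unfolding T2_def using suminf_split_initial_segment[OF sm, of 2] by (simp add: numeral_2_eq_2)
  have "0 \<le> T1" unfolding T1_def by (intro suminf_nonneg sT1) (simp add: h0)
  moreover have "T1 \<le> T2" unfolding T1_def T2_def by (intro suminf_le sT1 sT2 b1)
  moreover have "T2 \<le> R"
  proof -
    have "(\<Sum>t<M. real (Suc (t + 2)) * h (t + 2)) \<le> R" for M
    proof -
      have "(\<Sum>t<M. real (Suc (t + 2)) * h (t + 2)) \<le> (\<Sum>t<M. 2 ^ Suc (Suc t) * h (Suc (Suc t)))"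
        by (rule sum_mono) (rule b2)
      then show ?thesis using R[of M] by linarith
    qed
    then show ?thesis unfolding T2_def by (intro suminf_le_const sT2)
  qed
  ultimately show ?thesis using e1 e2 by blast
qed

lemma series1:
  fixes h :: "nat \<Rightarrow> real"
  assumes h0: "\<And>t. 0 \<le> h t" and R: "\<And>M. (\<Sum>t<M. 2 ^ Suc t * h (Suc t)) \<le> R"
  shows "\<exists>T1 T2. (\<Sum>t. h t) = h 0 + T1 \<and> (\<Sum>t. real (Suc t) * h t) = h 0 + T2
     \<and> 0 \<le> T1 \<and> T1 \<le> T2 \<and> T2 \<le> R"
proof -
  have s2: "summable (\<lambda>t. 2 ^ Suc t * h (Suc t))"
    by (rule summableI_nonneg_bounded[OF _ R]) (simp add: h0)
  have le: "real t + 2 \<le> 2 ^ Suc t" for t using pow2_ge[of "Suc t"] by simp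
  have b2: "real (Suc (t + 1)) * h (t + 1) \<le> 2 ^ Suc t * h (Suc t)" for t
  proof -
    have "real (Suc (t + 1)) * h (t + 1) \<le> 2 ^ Suc t * h (t + 1)"
      using mult_right_mono[OF le[of t] h0[of "t+1"]] by (simp add: add.commute)
    then show ?thesis by simp
  qed
  have b1: "h (t + 1) \<le> real (Suc (t + 1)) * h (t + 1)" for t
    using mult_right_mono[of 1 "real (Suc (t+1))" "h (t+1)"] h0[of "t+1"] by simp
  have sT2: "summable (\<lambda>t. real (Suc (t + 1)) * h (t + 1))"
    by (rule summable_comparison_test'[OF s2, of 0]) (use b2 h0 in auto)
  have sT1: "summable (\<lambda>t. h (t + 1))"
    by (rule summable_comparison_test'[OF sT2, of 0]) (use b1 h0 in auto)
  have sh: "summable h" using sT1 by (subst summable_iff_shift[symmetric, of _ 1])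
  have sm: "summable (\<lambda>t. real (Suc t) * h t)" using sT2 by (subst summable_iff_shift[symmetric, of _ 1])
  define T1 where "T1 = (\<Sum>t. h (t + 1))"
  define T2 where "T2 = (\<Sum>t. real (Suc (t + 1)) * h (t + 1))"
  have e1: "(\<Sum>t. h t) = h 0 + T1"
    unfolding T1_def using suminf_split_initial_segment[OF sh, of 1] by simp
  have e2: "(\<Sum>t. real (Suc t) * h t) = h 0 + T2"
    unfolding T2_def using suminf_split_initial_segment[OF sm, of 1] by simp
  have "0 \<le> T1" unfolding T1_def by (intro suminf_nonneg sT1) (simp add: h0)
  moreover have "T1 \<le> T2" unfolding T1_def T2_def by (intro suminf_le sT1 sT2 b1)
  moreover have "T2 \<le> R"
  proof -
    have "(\<Sum>t<M. real (Suc (t + 1)) * h (t + 1)) \<le> R" for M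
    proof -
      have "(\<Sum>t<M. real (Suc (t + 1)) * h (t + 1)) \<le> (\<Sum>t<M. 2 ^ Suc t * h (Suc t))"
        by (rule sum_mono) (rule b2)
      then show ?thesis using R[of M] by linarith
    qed
    then show ?thesis unfolding T2_def by (intro suminf_le_const sT2)
  qed
  ultimately show ?thesis using e1 e2 by blast
qed



lemma setS1: "{0..N} - {0, N} = {1..<(N::nat)}" by auto
lemma setS2: "{0..N} - {N, 0} = {1..<(N::nat)}" by auto

lemma trans_q: assumes "0 < q" "q < (1::real)" shows "trans_prob (1 - q) N = Kq q N"
  using trans_Kq[of "1 - q" N] assms by simp

lemma h1_val:
  assumes q: "0 < q" "q < 1" and N: "1 \<le> N"
  shows "(\<Sum>z\<in>{1..<N}. Kq q N N z * Kq q N z 0) = q ^ (N * N) * ((2 - q ^ N) ^ N - 1 - (1 - q ^ N) ^ N)"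
proof -
  define a where "a = 1 - q ^ N"
  have t: "Kq q N N z * Kq q N z 0 = q ^ (N * N) * (real (N choose z) * a ^ z)" if z: "z \<in> {1..<N}" for z
  proof -
    have z0: "z \<noteq> 0" using z by auto
    have "Kq q N z 0 = q ^ (z * N)" unfolding Kq_def using z0 by (simp add: power_mult)
    moreover have "(q ^ N) ^ (N - z) * q ^ (z * N) = q ^ (N * N)"
    proof -
      have "N * (N - z) + z * N = N * N" using z by (simp add: diff_mult_distrib2 algebra_simps)
      then show ?thesis by (metis power_add power_mult)
    qed
    moreover have "N \<noteq> 0" using N by auto
    ultimately show ?thesis unfolding Kq_def a_def by (simp add: mult_ac)
  qed
  have bin: "(1 + a) ^ N = (\<Sum>z\<le>N. real (N choose z) * a ^ z)"
    using binomial_ring[of a 1 N] by (simp add: add.commute)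
  have set: "{..N} = insert 0 (insert N {1..<N})" using N by auto
  have "(\<Sum>z\<le>N. real (N choose z) * a ^ z) = 1 + (a ^ N + (\<Sum>z\<in>{1..<N}. real (N choose z) * a ^ z))"
    unfolding set using N by (subst sum.insert; simp)+
  then have "(\<Sum>z\<in>{1..<N}. real (N choose z) * a ^ z) = (1 + a) ^ N - 1 - a ^ N" using bin by simp
  moreover have "(\<Sum>z\<in>{1..<N}. Kq q N N z * Kq q N z 0) = q ^ (N * N) * (\<Sum>z\<in>{1..<N}. real (N choose z) * a ^ z)"
    by (simp add: t sum_distrib_left)
  moreover have "1 + a = 2 - q ^ N" unfolding a_def by simp
  ultimately show ?thesis unfolding a_def by simp
qed

lemma part1_N:
  assumes q: "0 < q" "q < 1" and KN: "Kf N < N" and small: "epsK q N (Kf N) + etaK q N (Kf N) \<le> 1/4"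
  shows "\<exists>T1 T2. hit_before (1 - q) N 0 N = q ^ (N * N) + q ^ (N * N) * ((2 - q ^ N) ^ N - 1 - (1 - q ^ N) ^ N) + T1
     \<and> hit_time_mass (1 - q) N 0 N = q ^ (N * N) + 2 * (q ^ (N * N) * ((2 - q ^ N) ^ N - 1 - (1 - q ^ N) ^ N)) + T2
     \<and> 0 \<le> T1 \<and> T1 \<le> T2 \<and> T2 \<le> 8 * q ^ (N * N) * (epsK q N (Kf N) * 2 ^ N + real (Kf N) * real N ^ Kf N * (1 + q) ^ N)"
proof -
  define h where "h t = Hs (Kq q N) {1..<N} 0 t N" for t
  have fh: "first_hit_at (1 - q) N 0 N (Suc t) = h t" for t
    unfolding first_hit_Hs setS1 trans_q[OF q] h_def ..
  have T0: "0 \<le> Kq q N x y" for x y using q by (intro Kq_nonneg) auto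
  have h0: "0 \<le> h t" for t unfolding h_def by (rule Hs_nonneg[OF T0])
  have N1: "1 \<le> N" using KN by simp
  have u0: "0 \<le> u1 q N x" for x
  proof -
    have "1 \<le> (1 + q ^ (N - x)) ^ N" by (rule one_le_power) (use q in simp)
    then have "0 \<le> 2 + 8 * ((1 + q ^ (N - x)) ^ N - 1)" by simp
    then show ?thesis unfolding u1_def using q by (intro mult_nonneg_nonneg) auto
  qed
  have R: "(\<Sum>t<M. 2 ^ Suc (Suc t) * h (Suc (Suc t))) \<le> 8 * q ^ (N * N) * (epsK q N (Kf N) * 2 ^ N + real (Kf N) * real N ^ Kf N * (1 + q) ^ N)" for M
  proof -
    have "(\<Sum>t<M. 2 ^ Suc (Suc t) * h (Suc (Suc t))) \<le> (\<Sum>z\<in>{1..<N}. Kq q N N z * (u1 q N z - 2 * Kq q N z 0))"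
      unfolding h_def
      by (rule tail2[OF finite_atLeastLessThan T0 _ u0 part1_super[OF q KN small]]) auto
    also have "\<dots> \<le> 8 * q ^ (N * N) * (epsK q N (Kf N) * 2 ^ N + real (Kf N) * real N ^ Kf N * (1 + q) ^ N)"
      by (rule part1_R2[OF q KN])
    finally show ?thesis .
  qed
  obtain T1 T2 where T: "(\<Sum>t. h t) = h 0 + h 1 + T1" "(\<Sum>t. real (Suc t) * h t) = h 0 + 2 * h 1 + T2"
    "0 \<le> T1" "T1 \<le> T2" "T2 \<le> 8 * q ^ (N * N) * (epsK q N (Kf N) * 2 ^ N + real (Kf N) * real N ^ Kf N * (1 + q) ^ N)"
    using series2[OF h0 R] by blast
  have hz: "h 0 = q ^ (N * N)" unfolding h_def Kq_def using N1 by (simp add: power_mult)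
  have ho: "h 1 = q ^ (N * N) * ((2 - q ^ N) ^ N - 1 - (1 - q ^ N) ^ N)"
    unfolding h_def using h1_val[OF q N1] by simp
  have "hit_before (1 - q) N 0 N = (\<Sum>t. h t)" unfolding hit_before_def fh ..
  moreover have "hit_time_mass (1 - q) N 0 N = (\<Sum>t. real (Suc t) * h t)" unfolding hit_time_mass_def fh ..
  ultimately show ?thesis using T hz ho by auto
qed

lemma part3_N:
  assumes q: "0 < q" "q < 1" and KN: "Kf N < N" and se: "epsK q N (Kf N) \<le> 1/12" and sn: "etaK q N (Kf N) \<le> 1/12"
  shows "\<exists>T1 T2. hit_before (1 - q) N N 0 = (1 - q ^ N) ^ N + T1
     \<and> hit_time_mass (1 - q) N N 0 = (1 - q ^ N) ^ N + T2
     \<and> 0 \<le> T1 \<and> T1 \<le> T2 \<and> T2 \<le> 12 * (1 - (1 - q ^ N) ^ N)"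
proof -
  define h where "h t = Hs (Kq q N) {1..<N} N t N" for t
  have fh: "first_hit_at (1 - q) N N 0 (Suc t) = h t" for t
    unfolding first_hit_Hs setS2 trans_q[OF q] h_def ..
  have T0: "0 \<le> Kq q N x y" for x y using q by (intro Kq_nonneg) auto
  have h0: "0 \<le> h t" for t unfolding h_def by (rule Hs_nonneg[OF T0])
  have N1: "1 \<le> N" using KN by simp
  have u0: "0 \<le> u3 K x" for K x unfolding u3_def by simp
  have R: "(\<Sum>t<M. 2 ^ Suc t * h (Suc t)) \<le> 12 * (1 - (1 - q ^ N) ^ N)" for M
  proof -
    have "(\<Sum>t<M. 2 ^ Suc t * h (Suc t)) \<le> (\<Sum>z\<in>{1..<N}. Kq q N N z * u3 (Kf N) z)"
      unfolding h_def
      by (rule tail1[OF finite_atLeastLessThan T0 _ u0 part3_super[OF q KN se sn]]) auto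
    also have "\<dots> \<le> 12 * (1 - (1 - q ^ N) ^ N)" by (rule part3_final[OF q])
    finally show ?thesis .
  qed
  obtain T1 T2 where T: "(\<Sum>t. h t) = h 0 + T1" "(\<Sum>t. real (Suc t) * h t) = h 0 + T2"
    "0 \<le> T1" "T1 \<le> T2" "T2 \<le> 12 * (1 - (1 - q ^ N) ^ N)"
    using series1[OF h0 R] by blast
  have hz: "h 0 = (1 - q ^ N) ^ N" unfolding h_def using Kq_xN[of N q N] N1 by simp
  have "hit_before (1 - q) N N 0 = (\<Sum>t. h t)" unfolding hit_before_def fh ..
  moreover have "hit_time_mass (1 - q) N N 0 = (\<Sum>t. real (Suc t) * h t)" unfolding hit_time_mass_def fh ..
  ultimately show ?thesis using T hz by auto
qed



lemma Kf_lt: "2 \<le> N \<Longrightarrow> Kf N < N"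
proof -
  assume N: "2 \<le> N"
  have "sqrt (real N) < sqrt (real N * real N)" using N by (intro real_sqrt_less_mono) auto
  also have "\<dots> = real N" by simp
  finally have "real (Kf N) < real N" using Kf_le[of N] by linarith
  then show ?thesis by simp
qed

lemma ev_good:
  assumes q: "0 < q" "q < 1"
  shows "\<forall>\<^sub>F N in sequentially. Kf N < N \<and> epsK q N (Kf N) \<le> 1/12 \<and> etaK q N (Kf N) \<le> 1/12"
proof -
  have a: "\<forall>\<^sub>F N in sequentially. epsK q N (Kf N) < 1/12" by (rule order_tendstoD(2)[OF lim_eps[OF q]]) simp
  have b: "\<forall>\<^sub>F N in sequentially. etaK q N (Kf N) < 1/12" by (rule order_tendstoD(2)[OF lim_eta[OF q]]) simp
  have c: "\<forall>\<^sub>F N in sequentially. Kf N < N" using eventually_ge_at_top[of 2] by eventually_elim (rule Kf_lt)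
  from a b c show ?thesis by eventually_elim auto
qed

lemma lim_half:
  assumes q: "0 < (q::real)" "q < 1"
  shows "(\<lambda>N. ((1 - q ^ N) / 2) ^ N) \<longlonglongrightarrow> 0"
proof (rule real_tendsto_sandwich[OF _ _ tendsto_const LIMSEQ_power_zero[of "1/2::real"]])
  have v: "0 \<le> 1 - q ^ N" "1 - q ^ N \<le> 1" for N using q by (auto simp: power_le_one)
  show "\<forall>\<^sub>F N in sequentially. 0 \<le> ((1 - q ^ N) / 2) ^ N" using v by (intro always_eventually allI) auto
  show "\<forall>\<^sub>F N in sequentially. ((1 - q ^ N) / 2) ^ N \<le> (1 / 2) ^ N"
    using v by (intro always_eventually allI power_mono) auto
qed simp

lemma norm1:
  assumes Q: "0 < (Q::real)" and h: "H = Q + Q * W + T1" and T: "0 \<le> T1" "T1 \<le> R"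
  shows "(1 + W) / 2 ^ N \<le> H / (Q * 2 ^ N) \<and> H / (Q * 2 ^ N) \<le> (1 + W) / 2 ^ N + R / (Q * 2 ^ N)"
proof -
  have e: "H / (Q * 2 ^ N) = (1 + W) / 2 ^ N + T1 / (Q * 2 ^ N)" unfolding h using Q by (simp add: field_simps)
  have "0 \<le> T1 / (Q * 2 ^ N)" using Q T by simp
  moreover have "T1 / (Q * 2 ^ N) \<le> R / (Q * 2 ^ N)" using Q T by (intro divide_right_mono) auto
  ultimately show ?thesis unfolding e by simp
qed

lemma norm2:
  assumes Q: "0 < (Q::real)" and h: "H = Q + 2 * (Q * W) + T1" and T: "0 \<le> T1" "T1 \<le> R"
  shows "(1 + 2 * W) / 2 ^ N \<le> H / (Q * 2 ^ N) \<and> H / (Q * 2 ^ N) \<le> (1 + 2 * W) / 2 ^ N + R / (Q * 2 ^ N)"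
proof -
  have e: "H / (Q * 2 ^ N) = (1 + 2 * W) / 2 ^ N + T1 / (Q * 2 ^ N)" unfolding h using Q by (simp add: field_simps)
  have "0 \<le> T1 / (Q * 2 ^ N)" using Q T by simp
  moreover have "T1 / (Q * 2 ^ N) \<le> R / (Q * 2 ^ N)" using Q T by (intro divide_right_mono) auto
  ultimately show ?thesis unfolding e by simp
qed

theorem lemma5p1:
  fixes p :: real
  assumes "0 < p" and "p < 1"
  shows "(\<lambda>N. hit_before p N 0 N) \<sim>[at_top] (\<lambda>N. (1 - p) ^ (N ^ 2) * 2 ^ N) \<and>
         (\<lambda>N. cond_hit_time p N 0 N) \<longlonglongrightarrow> 2 \<and>
         (\<lambda>N. cond_hit_time p N N 0) \<longlonglongrightarrow> 1"
proof -
  define q where "q = 1 - p"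
  have q: "0 < q" "q < 1" using assms unfolding q_def by auto
  have pq: "p = 1 - q" unfolding q_def by simp
  define B where "B N = q ^ (N * N) * 2 ^ N" for N :: nat
  define W where "W N = (2 - q ^ N) ^ N - 1 - (1 - q ^ N) ^ N" for N :: nat
  define a1 where "a1 N = (1 - 1/2 * q ^ N) ^ N - ((1 - q ^ N) / 2) ^ N" for N :: nat
  define e where "e N = 8 * (epsK q N (Kf N) + real (Kf N) * real N ^ Kf N * ((1 + q) / 2) ^ N)" for N :: nat
  have B0: "0 < B N" for N unfolding B_def using q by simp
  have a1W: "(1 + W N) / 2 ^ N = a1 N" for N
  proof -
    have h: "(2 - q ^ N) / 2 = 1 - 1/2 * q ^ N" by simp
    have "(2 - q ^ N) ^ N / 2 ^ N = (1 - 1/2 * q ^ N) ^ N"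
      by (simp only: power_divide[symmetric] h)
    moreover have "(1 - q ^ N) ^ N / 2 ^ N = ((1 - q ^ N) / 2) ^ N" by (simp only: power_divide)
    moreover have "1 + W N = (2 - q ^ N) ^ N - (1 - q ^ N) ^ N" unfolding W_def by simp
    ultimately show ?thesis unfolding a1_def by (simp only: diff_divide_distrib)
  qed
  have a1W2: "(1 + 2 * W N) / 2 ^ N = 2 * a1 N - (1/2) ^ N" for N
  proof -
    have "1 + 2 * W N = 2 * (1 + W N) - 1" by simp
    then have "(1 + 2 * W N) / 2 ^ N = 2 * ((1 + W N) / 2 ^ N) - 1 / 2 ^ N"
      by (simp only: diff_divide_distrib times_divide_eq_right)
    then show ?thesis unfolding a1W by (simp only: power_one_over)
  qed
  have Re: "8 * q ^ (N * N) * (epsK q N (Kf N) * 2 ^ N + real (Kf N) * real N ^ Kf N * (1 + q) ^ N) / (q ^ (N * N) * 2 ^ N) = e N" for N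
    unfolding e_def using q by (simp add: field_simps power_divide)
  have good: "\<forall>\<^sub>F N in sequentially. Kf N < N \<and> epsK q N (Kf N) \<le> 1/12 \<and> etaK q N (Kf N) \<le> 1/12"
    by (rule ev_good[OF q])
  have bnd1: "\<forall>\<^sub>F N in sequentially. a1 N \<le> hit_before p N 0 N / B N \<and> hit_before p N 0 N / B N \<le> a1 N + e N
      \<and> 2 * a1 N - (1/2) ^ N \<le> hit_time_mass p N 0 N / B N \<and> hit_time_mass p N 0 N / B N \<le> 2 * a1 N - (1/2) ^ N + e N"
    using good
  proof eventually_elim
    case (elim N)
    then have KN: "Kf N < N" and sm: "epsK q N (Kf N) + etaK q N (Kf N) \<le> 1/4" by auto
    obtain T1 T2 where T: "hit_before (1 - q) N 0 N = q ^ (N * N) + q ^ (N * N) * W N + T1"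
      "hit_time_mass (1 - q) N 0 N = q ^ (N * N) + 2 * (q ^ (N * N) * W N) + T2"
      "0 \<le> T1" "T1 \<le> T2" "T2 \<le> 8 * q ^ (N * N) * (epsK q N (Kf N) * 2 ^ N + real (Kf N) * real N ^ Kf N * (1 + q) ^ N)"
      using part1_N[OF q KN sm] unfolding W_def by blast
    have Q: "0 < q ^ (N * N)" using q by simp
    from norm1[OF Q T(1) T(3), of "8 * q ^ (N * N) * (epsK q N (Kf N) * 2 ^ N + real (Kf N) * real N ^ Kf N * (1 + q) ^ N)" N] T(4,5)
    have 1: "a1 N \<le> hit_before p N 0 N / B N \<and> hit_before p N 0 N / B N \<le> a1 N + e N"
      unfolding a1W Re B_def pq by simp
    from norm2[OF Q T(2) _, of "8 * q ^ (N * N) * (epsK q N (Kf N) * 2 ^ N + real (Kf N) * real N ^ Kf N * (1 + q) ^ N)" N] T(3,4,5)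
    have 2: "2 * a1 N - (1/2) ^ N \<le> hit_time_mass p N 0 N / B N \<and> hit_time_mass p N 0 N / B N \<le> 2 * a1 N - (1/2) ^ N + e N"
      unfolding a1W2 Re B_def pq by simp
    from 1 2 show ?case by blast
  qed
  have la1: "a1 \<longlonglongrightarrow> 1"
  proof -
    have "a1 \<longlonglongrightarrow> 1 - 0" unfolding a1_def
      by (intro tendsto_diff lim_pow_one lim_half q) auto
    then show ?thesis by simp
  qed
  have le: "e \<longlonglongrightarrow> 0"
  proof -
    have "e \<longlonglongrightarrow> 8 * (0 + 0)" unfolding e_def
      by (intro tendsto_intros lim_eps lim_D q)
    then show ?thesis by simp
  qed
  have hitB: "(\<lambda>N. hit_before p N 0 N / B N) \<longlonglongrightarrow> 1"
  proof (rule real_tendsto_sandwich[OF _ _ la1])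
    show "\<forall>\<^sub>F N in sequentially. a1 N \<le> hit_before p N 0 N / B N" using bnd1 by eventually_elim auto
    show "\<forall>\<^sub>F N in sequentially. hit_before p N 0 N / B N \<le> a1 N + e N" using bnd1 by eventually_elim auto
    show "(\<lambda>N. a1 N + e N) \<longlonglongrightarrow> 1" using tendsto_add[OF la1 le] by simp
  qed
  have massB: "(\<lambda>N. hit_time_mass p N 0 N / B N) \<longlonglongrightarrow> 2"
  proof (rule real_tendsto_sandwich)
    have l: "(\<lambda>N. 2 * a1 N - (1/2) ^ N) \<longlonglongrightarrow> 2 * 1 - 0"
      by (intro tendsto_intros la1 LIMSEQ_power_zero) auto
    then show "(\<lambda>N. 2 * a1 N - (1/2) ^ N) \<longlonglongrightarrow> 2" by simp
    show "(\<lambda>N. 2 * a1 N - (1/2) ^ N + e N) \<longlonglongrightarrow> 2" using tendsto_add[OF l le] by simp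
    show "\<forall>\<^sub>F N in sequentially. 2 * a1 N - (1/2) ^ N \<le> hit_time_mass p N 0 N / B N" using bnd1 by eventually_elim auto
    show "\<forall>\<^sub>F N in sequentially. hit_time_mass p N 0 N / B N \<le> 2 * a1 N - (1/2) ^ N + e N" using bnd1 by eventually_elim auto
  qed
  have P1: "(\<lambda>N. hit_before p N 0 N) \<sim>[at_top] (\<lambda>N. (1 - p) ^ (N ^ 2) * 2 ^ N)"
  proof (rule asymp_equivI')
    have "B N = (1 - p) ^ (N ^ 2) * 2 ^ N" for N unfolding B_def q_def by (simp add: power2_eq_square)
    then show "(\<lambda>N. hit_before p N 0 N / ((1 - p) ^ (N ^ 2) * 2 ^ N)) \<longlonglongrightarrow> 1" using hitB by simp
  qed
  have P2: "(\<lambda>N. cond_hit_time p N 0 N) \<longlonglongrightarrow> 2"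
  proof -
    have e: "cond_hit_time p N 0 N = (hit_time_mass p N 0 N / B N) / (hit_before p N 0 N / B N)" for N
      unfolding cond_hit_time_def using B0[of N] by (simp add: field_simps)
    have "(\<lambda>N. (hit_time_mass p N 0 N / B N) / (hit_before p N 0 N / B N)) \<longlonglongrightarrow> 2 / 1"
      by (intro tendsto_divide massB hitB) simp
    then show ?thesis unfolding e by simp
  qed
  define c0 where "c0 N = (1 - q ^ N) ^ N" for N :: nat
  have lc0: "c0 \<longlonglongrightarrow> 1" unfolding c0_def using lim_pow_one[OF q, of 1] by simp
  have bnd3: "\<forall>\<^sub>F N in sequentially. c0 N \<le> hit_before p N N 0 \<and> hit_before p N N 0 \<le> c0 N + 12 * (1 - c0 N)
      \<and> c0 N \<le> hit_time_mass p N N 0 \<and> hit_time_mass p N N 0 \<le> c0 N + 12 * (1 - c0 N)"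
    using good
  proof eventually_elim
    case (elim N)
    then have KN: "Kf N < N" and se: "epsK q N (Kf N) \<le> 1/12" and sn: "etaK q N (Kf N) \<le> 1/12" by auto
    from part3_N[OF q KN se sn] show ?case unfolding c0_def pq by auto
  qed
  have u3l: "(\<lambda>N. c0 N + 12 * (1 - c0 N)) \<longlonglongrightarrow> 1"
  proof -
    have "(\<lambda>N. c0 N + 12 * (1 - c0 N)) \<longlonglongrightarrow> 1 + 12 * (1 - 1)" by (intro tendsto_intros lc0)
    then show ?thesis by simp
  qed
  have h3: "(\<lambda>N. hit_before p N N 0) \<longlonglongrightarrow> 1"
    by (rule real_tendsto_sandwich[OF _ _ lc0 u3l]) (use bnd3 in \<open>eventually_elim; auto\<close>)+
  have m3: "(\<lambda>N. hit_time_mass p N N 0) \<longlonglongrightarrow> 1"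
    by (rule real_tendsto_sandwich[OF _ _ lc0 u3l]) (use bnd3 in \<open>eventually_elim; auto\<close>)+
  have P3: "(\<lambda>N. cond_hit_time p N N 0) \<longlonglongrightarrow> 1"
  proof -
    have "(\<lambda>N. hit_time_mass p N N 0 / hit_before p N N 0) \<longlonglongrightarrow> 1 / 1"
      by (intro tendsto_divide m3 h3) simp
    then show ?thesis unfolding cond_hit_time_def by simp
  qed
  from P1 P2 P3 show ?thesis by blast
qed

end
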